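(* Let $L$ be the generator (with domain $D(L)$) of a conservative Markov process having a stationary distribution $\nu$, and define $\mathcal{E}(f,g)=-\int Lf(x)g(x)\,\nu(dx)$ for $f,g\in D(L)$. If $\mathcal{E}$ is not symmetric, then $\mathrm{Sect}(\mathcal{E})>1$.
   Context: The sector constant $\mathrm{Sect}(\mathcal{E})$ is the infimum of all finite constants $C$ such that $\mathcal{E}(f,g)\le C\,\mathcal{E}(f,f)^{1/2}\mathcal{E}(g,g)^{1/2}$ for all $f,g\in D(L)$, and $\mathrm{Sect}(\mathcal{E})=\infty$ if no such $C$ exists. (Here $\mathcal{E}(f,f)\ge0$.) *)

theory Defs
  imports "HOL-Probability.Probability"
begin

text \<open>A time-homogeneous conservative Markov transition semigroup on the measurable
  space underlying \<open>\<nu>\<close>: each \<open>P t x\<close> is a probability measure (conservativeness),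
  \<open>P t\<close> is a measurable kernel, \<open>P 0\<close> is the identity and Chapman--Kolmogorov holds.\<close>
definition markov_semigroup :: "'a measure \<Rightarrow> (real \<Rightarrow> 'a \<Rightarrow> 'a measure) \<Rightarrow> bool" where
  "markov_semigroup \<nu> P \<longleftrightarrow>
     (\<forall>t\<ge>0. P t \<in> \<nu> \<rightarrow>\<^sub>M prob_algebra \<nu>) \<and>
     (\<forall>x\<in>space \<nu>. P 0 x = return \<nu> x) \<and>
     (\<forall>s\<ge>0. \<forall>t\<ge>0. \<forall>x\<in>space \<nu>. P (s + t) x = P s x \<bind> P t)"

definition stationary :: "'a measure \<Rightarrow> (real \<Rightarrow> 'a \<Rightarrow> 'a measure) \<Rightarrow> bool" where
  "stationary \<nu> P \<longleftrightarrow> prob_space \<nu> \<and> (\<forall>t\<ge>0. \<nu> \<bind> P t = \<nu>)"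

definition trans_op :: "(real \<Rightarrow> 'a \<Rightarrow> 'a measure) \<Rightarrow> real \<Rightarrow> ('a \<Rightarrow> real) \<Rightarrow> 'a \<Rightarrow> real" where
  "trans_op P t f x = (\<integral>y. f y \<partial>(P t x))"

definition sq_integrable :: "'a measure \<Rightarrow> ('a \<Rightarrow> real) \<Rightarrow> bool" where
  "sq_integrable \<nu> f \<longleftrightarrow> f \<in> borel_measurable \<nu> \<and> integrable \<nu> (\<lambda>x. (f x)\<^sup>2)"

text \<open>\<open>g\<close> is \<open>L f\<close> for the (strong) \<open>L\<^sup>2(\<nu>)\<close> generator \<open>L\<close> of the semigroup:
  \<open>(P t f - f)/t \<rightarrow> g\<close> in \<open>L\<^sup>2(\<nu>)\<close> as \<open>t \<rightarrow> 0+\<close>.\<close>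
definition is_generator :: "'a measure \<Rightarrow> (real \<Rightarrow> 'a \<Rightarrow> 'a measure) \<Rightarrow> ('a \<Rightarrow> real) \<Rightarrow> ('a \<Rightarrow> real) \<Rightarrow> bool" where
  "is_generator \<nu> P f g \<longleftrightarrow> sq_integrable \<nu> f \<and> sq_integrable \<nu> g \<and>
     ((\<lambda>t. \<integral>\<^sup>+x. ennreal (((trans_op P t f x - f x) / t - g x)\<^sup>2) \<partial>\<nu>) \<longlongrightarrow> 0) (at_right 0)"

text \<open>Domain \<open>D(L)\<close> and the generator \<open>L\<close> (determined \<open>\<nu>\<close>-a.e.).\<close>
definition gen_dom :: "'a measure \<Rightarrow> (real \<Rightarrow> 'a \<Rightarrow> 'a measure) \<Rightarrow> ('a \<Rightarrow> real) set" where
  "gen_dom \<nu> P = {f. \<exists>g. is_generator \<nu> P f g}"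

definition gen :: "'a measure \<Rightarrow> (real \<Rightarrow> 'a \<Rightarrow> 'a measure) \<Rightarrow> ('a \<Rightarrow> real) \<Rightarrow> ('a \<Rightarrow> real)" where
  "gen \<nu> P f = (SOME g. is_generator \<nu> P f g)"

definition dform :: "'a measure \<Rightarrow> (real \<Rightarrow> 'a \<Rightarrow> 'a measure) \<Rightarrow> ('a \<Rightarrow> real) \<Rightarrow> ('a \<Rightarrow> real) \<Rightarrow> real" where
  "dform \<nu> P f g = - (\<integral>x. gen \<nu> P f x * g x \<partial>\<nu>)"

text \<open>Sector constant: infimum of all finite \<open>C\<close> with the sector bound; \<open>\<infinity>\<close> if none.\<close>
definition sector_const :: "'a measure \<Rightarrow> (real \<Rightarrow> 'a \<Rightarrow> 'a measure) \<Rightarrow> ereal" where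
  "sector_const \<nu> P = Inf (ereal ` {C. \<forall>f\<in>gen_dom \<nu> P. \<forall>g\<in>gen_dom \<nu> P.
      dform \<nu> P f g \<le> C * sqrt (dform \<nu> P f f) * sqrt (dform \<nu> P g g)})"

end

theory Submission
  imports Defs
begin


lemma kern_props:
  assumes K: "Q \<in> \<nu> \<rightarrow>\<^sub>M prob_algebra \<nu>" and x: "x \<in> space \<nu>"
  shows "prob_space (Q x)" "sets (Q x) = sets \<nu>" "space (Q x) = space \<nu>"
  using measurable_space[OF K x] by (auto simp: space_prob_algebra dest: sets_eq_imp_space_eq)

lemma trans_meas:
  assumes K: "Q \<in> \<nu> \<rightarrow>\<^sub>M prob_algebra \<nu>" and f: "(f::_\<Rightarrow>real) \<in> borel_measurable \<nu>"
  shows "(\<lambda>x. \<integral>y. f y \<partial>Q x) \<in> borel_measurable \<nu>"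
  using measurable_compose[OF measurable_prob_algebraD[OF K] integral_measurable_subprob_algebra[OF f]] .

lemma sq_int_AE:
  assumes K: "Q \<in> \<nu> \<rightarrow>\<^sub>M prob_algebra \<nu>" and B: "\<nu> \<bind> Q = \<nu>"
    and f: "(f::_\<Rightarrow>real) \<in> borel_measurable \<nu>" and I: "integrable \<nu> (\<lambda>x. (f x)\<^sup>2)"
  shows "AE x in \<nu>. integrable (Q x) (\<lambda>y. (f y)\<^sup>2) \<and> integrable (Q x) f"
proof -
  have Ks: "Q \<in> \<nu> \<rightarrow>\<^sub>M subprob_algebra \<nu>" using measurable_prob_algebraD[OF K] .
  have fm2: "(\<lambda>y. ennreal ((f y)\<^sup>2)) \<in> borel_measurable \<nu>" using f by measurable
  have "(\<integral>\<^sup>+x. \<integral>\<^sup>+y. ennreal ((f y)\<^sup>2) \<partial>Q x \<partial>\<nu>) = (\<integral>\<^sup>+y. ennreal ((f y)\<^sup>2) \<partial>(\<nu> \<bind> Q))"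
    using nn_integral_bind[OF fm2 Ks] by simp
  also have "\<dots> = (\<integral>\<^sup>+y. ennreal ((f y)\<^sup>2) \<partial>\<nu>)" using B by simp
  also have "\<dots> < \<infinity>" using I by (simp add: integrable_iff_bounded)
  finally have fin: "(\<integral>\<^sup>+x. \<integral>\<^sup>+y. ennreal ((f y)\<^sup>2) \<partial>Q x \<partial>\<nu>) \<noteq> \<infinity>" by simp
  have mm: "(\<lambda>x. \<integral>\<^sup>+y. ennreal ((f y)\<^sup>2) \<partial>Q x) \<in> borel_measurable \<nu>"
    using measurable_compose[OF Ks nn_integral_measurable_subprob_algebra[OF fm2]] .
  have "AE x in \<nu>. (\<integral>\<^sup>+y. ennreal ((f y)\<^sup>2) \<partial>Q x) \<noteq> \<infinity>"
    by (rule nn_integral_PInf_AE[OF mm fin])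
  moreover have "integrable (Q x) (\<lambda>y. (f y)\<^sup>2) \<and> integrable (Q x) f"
    if x: "x \<in> space \<nu>" and fx: "(\<integral>\<^sup>+y. ennreal ((f y)\<^sup>2) \<partial>Q x) \<noteq> \<infinity>" for x
  proof -
    note kp = kern_props[OF K x]
    have fQ: "f \<in> borel_measurable (Q x)" using f measurable_cong_sets[OF kp(2) refl] by blast
    have i2: "integrable (Q x) (\<lambda>y. (f y)\<^sup>2)"
      unfolding integrable_iff_bounded
    proof
      show "(\<lambda>y. (f y)\<^sup>2) \<in> borel_measurable (Q x)" using fQ by measurable
      show "(\<integral>\<^sup>+y. ennreal (norm ((f y)\<^sup>2)) \<partial>Q x) < \<infinity>"
        using fx by (simp add: top.not_eq_extremum)
    qed
    moreover have "integrable (Q x) f"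
      by (rule finite_measure.square_integrable_imp_integrable[OF prob_space.finite_measure[OF kp(1)] fQ i2])
    ultimately show "integrable (Q x) (\<lambda>y. (f y)\<^sup>2) \<and> integrable (Q x) f" by blast
  qed
  ultimately show ?thesis by (smt (verit) AE_mp AE_I2)
qed

lemma sq_int_trans:
  assumes K: "Q \<in> \<nu> \<rightarrow>\<^sub>M prob_algebra \<nu>" and B: "\<nu> \<bind> Q = \<nu>"
    and f: "(f::_\<Rightarrow>real) \<in> borel_measurable \<nu>" and I: "integrable \<nu> (\<lambda>x. (f x)\<^sup>2)"
  shows "integrable \<nu> (\<lambda>x. \<integral>y. (f y)\<^sup>2 \<partial>Q x)"
    "(\<integral>x. (\<integral>y. (f y)\<^sup>2 \<partial>Q x) \<partial>\<nu>) = (\<integral>x. (f x)\<^sup>2 \<partial>\<nu>)"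
proof -
  have Ks: "Q \<in> \<nu> \<rightarrow>\<^sub>M subprob_algebra \<nu>" using measurable_prob_algebraD[OF K] .
  have fm2: "(\<lambda>y. ennreal ((f y)\<^sup>2)) \<in> borel_measurable \<nu>" using f by measurable
  have f2: "(\<lambda>y. (f y)\<^sup>2) \<in> borel_measurable \<nu>" using f by measurable
  have m: "(\<lambda>x. \<integral>y. (f y)\<^sup>2 \<partial>Q x) \<in> borel_measurable \<nu>" by (rule trans_meas[OF K f2])
  have AEi: "AE x in \<nu>. integrable (Q x) (\<lambda>y. (f y)\<^sup>2)" using sq_int_AE[OF K B f I] by auto
  have "(\<integral>\<^sup>+x. ennreal (\<integral>y. (f y)\<^sup>2 \<partial>Q x) \<partial>\<nu>) = (\<integral>\<^sup>+x. \<integral>\<^sup>+y. ennreal ((f y)\<^sup>2) \<partial>Q x \<partial>\<nu>)"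
  proof (rule nn_integral_cong_AE)
    show "AE x in \<nu>. ennreal (\<integral>y. (f y)\<^sup>2 \<partial>Q x) = (\<integral>\<^sup>+y. ennreal ((f y)\<^sup>2) \<partial>Q x)"
      using AEi by (auto intro!: nn_integral_eq_integral[symmetric])
  qed
  also have "\<dots> = (\<integral>\<^sup>+y. ennreal ((f y)\<^sup>2) \<partial>(\<nu> \<bind> Q))"
    using nn_integral_bind[OF fm2 Ks] by simp
  also have "\<dots> = (\<integral>\<^sup>+y. ennreal ((f y)\<^sup>2) \<partial>\<nu>)" using B by simp
  also have "\<dots> = ennreal (\<integral>x. (f x)\<^sup>2 \<partial>\<nu>)"
    using I by (auto intro!: nn_integral_eq_integral)
  finally have eq: "(\<integral>\<^sup>+x. ennreal (\<integral>y. (f y)\<^sup>2 \<partial>Q x) \<partial>\<nu>) = ennreal (\<integral>x. (f x)\<^sup>2 \<partial>\<nu>)" .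
  have "integrable \<nu> (\<lambda>x. \<integral>y. (f y)\<^sup>2 \<partial>Q x) \<and> (\<integral>x. (\<integral>y. (f y)\<^sup>2 \<partial>Q x) \<partial>\<nu>) = (\<integral>x. (f x)\<^sup>2 \<partial>\<nu>)"
    using nn_integral_eq_integrable[OF m, of "\<integral>x. (f x)\<^sup>2 \<partial>\<nu>"] eq
    by (auto intro!: AE_I2 integral_nonneg)
  then show "integrable \<nu> (\<lambda>x. \<integral>y. (f y)\<^sup>2 \<partial>Q x)"
    "(\<integral>x. (\<integral>y. (f y)\<^sup>2 \<partial>Q x) \<partial>\<nu>) = (\<integral>x. (f x)\<^sup>2 \<partial>\<nu>)" by auto
qed

lemma jensen_sq:
  assumes "prob_space M" "integrable M (f::_\<Rightarrow>real)" "integrable M (\<lambda>x. (f x)\<^sup>2)"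
  shows "(\<integral>x. f x \<partial>M)\<^sup>2 \<le> (\<integral>x. (f x)\<^sup>2 \<partial>M)"
proof -
  have "0 \<le> prob_space.variance M f" by (simp add: integral_nonneg)
  then show ?thesis using prob_space.variance_eq[OF assms] by simp
qed

lemma trans_sq_le:
  assumes K: "Q \<in> \<nu> \<rightarrow>\<^sub>M prob_algebra \<nu>" and B: "\<nu> \<bind> Q = \<nu>"
    and f: "(f::_\<Rightarrow>real) \<in> borel_measurable \<nu>" and I: "integrable \<nu> (\<lambda>x. (f x)\<^sup>2)"
  shows "AE x in \<nu>. (\<integral>y. f y \<partial>Q x)\<^sup>2 \<le> (\<integral>y. (f y)\<^sup>2 \<partial>Q x)"
  using sq_int_AE[OF K B f I]
  by (rule AE_mp) (auto intro!: AE_I2 jensen_sq kern_props[OF K])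

lemma sq_integrable_trans:
  assumes K: "Q \<in> \<nu> \<rightarrow>\<^sub>M prob_algebra \<nu>" and B: "\<nu> \<bind> Q = \<nu>"
    and f: "sq_integrable \<nu> f"
  shows "sq_integrable \<nu> (\<lambda>x. \<integral>y. f y \<partial>Q x)"
proof -
  have fm: "f \<in> borel_measurable \<nu>" and I: "integrable \<nu> (\<lambda>x. (f x)\<^sup>2)"
    using f by (auto simp: sq_integrable_def)
  have m: "(\<lambda>x. \<integral>y. f y \<partial>Q x) \<in> borel_measurable \<nu>" by (rule trans_meas[OF K fm])
  have "integrable \<nu> (\<lambda>x. (\<integral>y. f y \<partial>Q x)\<^sup>2)"
  proof (rule Bochner_Integration.integrable_bound[OF sq_int_trans(1)[OF K B fm I]])
    show "(\<lambda>x. (\<integral>y. f y \<partial>Q x)\<^sup>2) \<in> borel_measurable \<nu>" using m by measurable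
    show "AE x in \<nu>. norm ((\<integral>y. f y \<partial>Q x)\<^sup>2) \<le> norm (\<integral>y. (f y)\<^sup>2 \<partial>Q x)"
      using trans_sq_le[OF K B fm I] by eventually_elim auto
  qed
  then show ?thesis using m by (simp add: sq_integrable_def)
qed

lemma trans_add:
  assumes K: "Q \<in> \<nu> \<rightarrow>\<^sub>M prob_algebra \<nu>" and B: "\<nu> \<bind> Q = \<nu>"
    and f: "sq_integrable \<nu> f" and g: "sq_integrable \<nu> g"
  shows "AE x in \<nu>. (\<integral>y. f y + g y \<partial>Q x) = (\<integral>y. f y \<partial>Q x) + (\<integral>y. g y \<partial>Q x)"
proof -
  have "AE x in \<nu>. integrable (Q x) f" using sq_int_AE[OF K B, of f] f by (auto simp: sq_integrable_def)
  moreover have "AE x in \<nu>. integrable (Q x) g" using sq_int_AE[OF K B, of g] g by (auto simp: sq_integrable_def)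
  ultimately show ?thesis by eventually_elim simp
qed



context
  fixes \<nu> :: "'a measure" and P :: "real \<Rightarrow> 'a \<Rightarrow> 'a measure"
  assumes Kt: "\<And>t. t \<ge> 0 \<Longrightarrow> P t \<in> \<nu> \<rightarrow>\<^sub>M prob_algebra \<nu>"
    and Bt: "\<And>t. t \<ge> 0 \<Longrightarrow> \<nu> \<bind> P t = \<nu>"
begin

lemma meas_D:
  assumes t: "t \<ge> 0" and f: "f \<in> borel_measurable \<nu>" and g: "g \<in> borel_measurable \<nu>"
  shows "(\<lambda>x. ((trans_op P t f x - f x) / t - g x)\<^sup>2) \<in> borel_measurable \<nu>"
proof -
  have "trans_op P t f \<in> borel_measurable \<nu>"
    unfolding trans_op_def[abs_def] by (rule trans_meas[OF Kt[OF t] f])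
  then show ?thesis using f g by measurable
qed

lemma sq_add:
  assumes "sq_integrable \<nu> f" "sq_integrable \<nu> g"
  shows "sq_integrable \<nu> (\<lambda>x. f x + g x)"
proof -
  have m: "f \<in> borel_measurable \<nu>" "g \<in> borel_measurable \<nu>"
    and i: "integrable \<nu> (\<lambda>x. (f x)\<^sup>2)" "integrable \<nu> (\<lambda>x. (g x)\<^sup>2)"
    using assms by (auto simp: sq_integrable_def)
  have "integrable \<nu> (\<lambda>x. (f x + g x)\<^sup>2)"
  proof (rule Bochner_Integration.integrable_bound)
    show "integrable \<nu> (\<lambda>x. 2 * (f x)\<^sup>2 + 2 * (g x)\<^sup>2)" using i by auto
    show "(\<lambda>x. (f x + g x)\<^sup>2) \<in> borel_measurable \<nu>" using m by measurable
    show "AE x in \<nu>. norm ((f x + g x)\<^sup>2) \<le> norm (2 * (f x)\<^sup>2 + 2 * (g x)\<^sup>2)"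
    proof (rule AE_I2)
      fix x
      have "(f x + g x)\<^sup>2 \<le> 2 * (f x)\<^sup>2 + 2 * (g x)\<^sup>2"
        by (smt (verit) sum_squares_ge_zero power2_sum power2_diff zero_le_power2)
      then show "norm ((f x + g x)\<^sup>2) \<le> norm (2 * (f x)\<^sup>2 + 2 * (g x)\<^sup>2)" by simp
    qed
  qed
  with m show ?thesis by (auto simp: sq_integrable_def)
qed

lemma sq_scale:
  assumes "sq_integrable \<nu> f"
  shows "sq_integrable \<nu> (\<lambda>x. c * f x)"
  using assms by (auto simp: sq_integrable_def power_mult_distrib)

lemma ineq2: "((a::real) + b)\<^sup>2 \<le> 2 * a\<^sup>2 + 2 * b\<^sup>2"
  by (smt (verit) power2_sum zero_le_power2 power2_diff)

lemma gen_unique: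
  assumes g1: "is_generator \<nu> P f g1" and g2: "is_generator \<nu> P f g2"
  shows "AE x in \<nu>. g1 x = g2 x"
proof -
  have m: "f \<in> borel_measurable \<nu>" "g1 \<in> borel_measurable \<nu>" "g2 \<in> borel_measurable \<nu>"
    using g1 g2 by (auto simp: is_generator_def sq_integrable_def)
  define e where "e = (\<lambda>g t. \<integral>\<^sup>+x. ennreal (((trans_op P t f x - f x) / t - g x)\<^sup>2) \<partial>\<nu>)"
  have t1: "(e g1 \<longlongrightarrow> 0) (at_right 0)" "(e g2 \<longlongrightarrow> 0) (at_right 0)"
    using g1 g2 by (auto simp: is_generator_def e_def)
  have "((\<lambda>t. 2 * e g1 t + 2 * e g2 t) \<longlongrightarrow> 2 * 0 + 2 * 0) (at_right 0)"
    by (intro tendsto_add ennreal_tendsto_cmult t1) auto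
  then have lim: "((\<lambda>t. 2 * e g1 t + 2 * e g2 t) \<longlongrightarrow> 0) (at_right (0::real))" by simp
  have ev: "eventually (\<lambda>t. (\<integral>\<^sup>+x. ennreal ((g1 x - g2 x)\<^sup>2) \<partial>\<nu>) \<le> 2 * e g1 t + 2 * e g2 t) (at_right (0::real))"
  proof (rule eventually_at_rightI[where b=1])
    fix t :: real assume "t \<in> {0<..<1}"
    then have t: "t \<ge> 0" by auto
    let ?D = "\<lambda>x. (trans_op P t f x - f x) / t"
    have "(\<integral>\<^sup>+x. ennreal ((g1 x - g2 x)\<^sup>2) \<partial>\<nu>) \<le>
        (\<integral>\<^sup>+x. ennreal (2 * (?D x - g1 x)\<^sup>2) + ennreal (2 * (?D x - g2 x)\<^sup>2) \<partial>\<nu>)"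
    proof (rule nn_integral_mono)
      fix x
      have "(g1 x - g2 x)\<^sup>2 \<le> 2 * (?D x - g1 x)\<^sup>2 + 2 * (?D x - g2 x)\<^sup>2"
        using ineq2[of "g1 x - ?D x" "?D x - g2 x"] by (simp add: power2_commute)
      then show "ennreal ((g1 x - g2 x)\<^sup>2) \<le> ennreal (2 * (?D x - g1 x)\<^sup>2) + ennreal (2 * (?D x - g2 x)\<^sup>2)"
        by (simp add: ennreal_plus[symmetric] del: ennreal_plus)
    qed
    also have "\<dots> = 2 * e g1 t + 2 * e g2 t"
    proof -
      note md1[measurable] = meas_D[OF t m(1) m(2)]
      note md2[measurable] = meas_D[OF t m(1) m(3)]
      show ?thesis unfolding e_def
        by (subst nn_integral_add) (auto simp: ennreal_mult nn_integral_cmult)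
    qed
    finally show "(\<integral>\<^sup>+x. ennreal ((g1 x - g2 x)\<^sup>2) \<partial>\<nu>) \<le> 2 * e g1 t + 2 * e g2 t" .
  qed simp
  have "(\<integral>\<^sup>+x. ennreal ((g1 x - g2 x)\<^sup>2) \<partial>\<nu>) \<le> 0"
    using tendsto_le[OF trivial_limit_at_right_real lim tendsto_const ev] .
  then have "(\<integral>\<^sup>+x. ennreal ((g1 x - g2 x)\<^sup>2) \<partial>\<nu>) = 0" by simp
  then have "AE x in \<nu>. ennreal ((g1 x - g2 x)\<^sup>2) = 0"
    using nn_integral_0_iff_AE[of "\<lambda>x. ennreal ((g1 x - g2 x)\<^sup>2)" \<nu>] m by auto
  then show ?thesis by eventually_elim simp
qed

lemma gen_add:
  assumes gf: "is_generator \<nu> P f Lf" and gg: "is_generator \<nu> P g Lg"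
  shows "is_generator \<nu> P (\<lambda>x. f x + g x) (\<lambda>x. Lf x + Lg x)"
proof -
  have sq: "sq_integrable \<nu> f" "sq_integrable \<nu> g" "sq_integrable \<nu> Lf" "sq_integrable \<nu> Lg"
    using gf gg by (auto simp: is_generator_def)
  have m: "f \<in> borel_measurable \<nu>" "g \<in> borel_measurable \<nu>" "Lf \<in> borel_measurable \<nu>" "Lg \<in> borel_measurable \<nu>"
    using sq by (auto simp: sq_integrable_def)
  define e where "e = (\<lambda>f g t. \<integral>\<^sup>+x. ennreal (((trans_op P t f x - f x) / t - g x)\<^sup>2) \<partial>\<nu>)"
  have t1: "(e f Lf \<longlongrightarrow> 0) (at_right 0)" "(e g Lg \<longlongrightarrow> 0) (at_right 0)"
    using gf gg by (auto simp: is_generator_def e_def)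
  have "((\<lambda>t. 2 * e f Lf t + 2 * e g Lg t) \<longlongrightarrow> 2 * 0 + 2 * 0) (at_right 0)"
    by (intro tendsto_add ennreal_tendsto_cmult t1) auto
  then have lim: "((\<lambda>t. 2 * e f Lf t + 2 * e g Lg t) \<longlongrightarrow> 0) (at_right (0::real))" by simp
  have ev: "eventually (\<lambda>t. e (\<lambda>x. f x + g x) (\<lambda>x. Lf x + Lg x) t \<le> 2 * e f Lf t + 2 * e g Lg t) (at_right (0::real))"
  proof (rule eventually_at_rightI[where b=1])
    fix t :: real assume "t \<in> {0<..<1}"
    then have t: "t \<ge> 0" by auto
    let ?D = "\<lambda>f x. (trans_op P t f x - f x) / t"
    have AEadd: "AE x in \<nu>. trans_op P t (\<lambda>x. f x + g x) x = trans_op P t f x + trans_op P t g x"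
      unfolding trans_op_def using trans_add[OF Kt[OF t] Bt[OF t] sq(1,2)] .
    have "e (\<lambda>x. f x + g x) (\<lambda>x. Lf x + Lg x) t \<le>
        (\<integral>\<^sup>+x. ennreal (2 * (?D f x - Lf x)\<^sup>2) + ennreal (2 * (?D g x - Lg x)\<^sup>2) \<partial>\<nu>)"
      unfolding e_def
    proof (rule nn_integral_mono_AE)
      show "AE x in \<nu>. ennreal ((?D (\<lambda>x. f x + g x) x - (Lf x + Lg x))\<^sup>2)
          \<le> ennreal (2 * (?D f x - Lf x)\<^sup>2) + ennreal (2 * (?D g x - Lg x)\<^sup>2)"
        using AEadd
      proof eventually_elim
        case (elim x)
        have eq: "?D (\<lambda>x. f x + g x) x - (Lf x + Lg x) = (?D f x - Lf x) + (?D g x - Lg x)"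
          using elim by (simp add: field_simps add_divide_distrib diff_divide_distrib)
        have "(?D (\<lambda>x. f x + g x) x - (Lf x + Lg x))\<^sup>2 \<le> 2 * (?D f x - Lf x)\<^sup>2 + 2 * (?D g x - Lg x)\<^sup>2"
          unfolding eq by (rule ineq2)
        then show ?case by (simp add: ennreal_plus[symmetric] del: ennreal_plus)
      qed
    qed
    also have "\<dots> = 2 * e f Lf t + 2 * e g Lg t"
    proof -
      note md1[measurable] = meas_D[OF t m(1) m(3)]
      note md2[measurable] = meas_D[OF t m(2) m(4)]
      show ?thesis unfolding e_def
        by (subst nn_integral_add) (auto simp: ennreal_mult nn_integral_cmult)
    qed
    finally show "e (\<lambda>x. f x + g x) (\<lambda>x. Lf x + Lg x) t \<le> 2 * e f Lf t + 2 * e g Lg t" .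
  qed simp
  have "(e (\<lambda>x. f x + g x) (\<lambda>x. Lf x + Lg x) \<longlongrightarrow> 0) (at_right 0)"
    by (rule tendsto_sandwich[OF _ ev tendsto_const lim]) simp
  then show ?thesis using sq_add[OF sq(1,2)] sq_add[OF sq(3,4)]
    by (simp add: is_generator_def e_def)
qed

lemma gen_scale:
  assumes gf: "is_generator \<nu> P f Lf"
  shows "is_generator \<nu> P (\<lambda>x. c * f x) (\<lambda>x. c * Lf x)"
proof -
  have sq: "sq_integrable \<nu> f" "sq_integrable \<nu> Lf"
    using gf by (auto simp: is_generator_def)
  have m: "f \<in> borel_measurable \<nu>" "Lf \<in> borel_measurable \<nu>"
    using sq by (auto simp: sq_integrable_def)
  define e where "e = (\<lambda>f g t. \<integral>\<^sup>+x. ennreal (((trans_op P t f x - f x) / t - g x)\<^sup>2) \<partial>\<nu>)"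
  have t1: "(e f Lf \<longlongrightarrow> 0) (at_right 0)"
    using gf by (auto simp: is_generator_def e_def)
  have "((\<lambda>t. ennreal (c\<^sup>2) * e f Lf t) \<longlongrightarrow> ennreal (c\<^sup>2) * 0) (at_right 0)"
    by (intro ennreal_tendsto_cmult t1) auto
  then have lim: "((\<lambda>t. ennreal (c\<^sup>2) * e f Lf t) \<longlongrightarrow> 0) (at_right (0::real))" by simp
  have ev: "eventually (\<lambda>t. e (\<lambda>x. c * f x) (\<lambda>x. c * Lf x) t = ennreal (c\<^sup>2) * e f Lf t) (at_right (0::real))"
  proof (rule eventually_at_rightI[where b=1])
    fix t :: real assume "t \<in> {0<..<1}"
    then have t: "t \<ge> 0" by auto
    note md1[measurable] = meas_D[OF t m(1) m(2)]
    have eq: "((trans_op P t (\<lambda>x. c * f x) x - c * f x) / t - c * Lf x)\<^sup>2 =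
      c\<^sup>2 * ((trans_op P t f x - f x) / t - Lf x)\<^sup>2" for x
      by (simp add: trans_op_def power2_eq_square field_simps)
    show "e (\<lambda>x. c * f x) (\<lambda>x. c * Lf x) t = ennreal (c\<^sup>2) * e f Lf t"
      unfolding e_def eq by (simp add: ennreal_mult nn_integral_cmult)
  qed simp
  have "(e (\<lambda>x. c * f x) (\<lambda>x. c * Lf x) \<longlongrightarrow> 0) (at_right 0)"
    using tendsto_cong[OF ev] lim by simp
  then show ?thesis using sq_scale[OF sq(1)] sq_scale[OF sq(2)]
    by (simp add: is_generator_def e_def)
qed

end


lemma prod_int:
  assumes "sq_integrable \<nu> a" "sq_integrable \<nu> b"
  shows "integrable \<nu> (\<lambda>x. a x * b x)"
proof -
  have m: "a \<in> borel_measurable \<nu>" "b \<in> borel_measurable \<nu>"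
    and i: "integrable \<nu> (\<lambda>x. (a x)\<^sup>2)" "integrable \<nu> (\<lambda>x. (b x)\<^sup>2)"
    using assms by (auto simp: sq_integrable_def)
  show ?thesis
  proof (rule Bochner_Integration.integrable_bound)
    show "integrable \<nu> (\<lambda>x. (a x)\<^sup>2 + (b x)\<^sup>2)" using i by auto
    show "(\<lambda>x. a x * b x) \<in> borel_measurable \<nu>" using m by measurable
    show "AE x in \<nu>. norm (a x * b x) \<le> norm ((a x)\<^sup>2 + (b x)\<^sup>2)"
    proof (rule AE_I2)
      fix x
      have "\<bar>a x * b x\<bar> \<le> (a x)\<^sup>2 + (b x)\<^sup>2"
      proof -
        have "0 \<le> (\<bar>a x\<bar> - \<bar>b x\<bar>)\<^sup>2" by simp
        then have "2 * (\<bar>a x\<bar> * \<bar>b x\<bar>) \<le> (a x)\<^sup>2 + (b x)\<^sup>2"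
          by (simp add: power2_diff)
        moreover have "0 \<le> \<bar>a x\<bar> * \<bar>b x\<bar>" by simp
        ultimately show ?thesis by (simp only: abs_mult)
      qed
      then show "norm (a x * b x) \<le> norm ((a x)\<^sup>2 + (b x)\<^sup>2)" by simp
    qed
  qed
qed

context
  fixes \<nu> :: "'a measure" and P :: "real \<Rightarrow> 'a \<Rightarrow> 'a measure"
  assumes Kt: "\<And>t. t \<ge> 0 \<Longrightarrow> P t \<in> \<nu> \<rightarrow>\<^sub>M prob_algebra \<nu>"
    and Bt: "\<And>t. t \<ge> 0 \<Longrightarrow> \<nu> \<bind> P t = \<nu>"
begin

lemma gen_spec: "f \<in> gen_dom \<nu> P \<Longrightarrow> is_generator \<nu> P f (gen \<nu> P f)"
  unfolding gen_dom_def gen_def by (simp add: someI_ex)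

lemma dom_add: "f \<in> gen_dom \<nu> P \<Longrightarrow> g \<in> gen_dom \<nu> P \<Longrightarrow> (\<lambda>x. f x + g x) \<in> gen_dom \<nu> P"
  using gen_add[OF Kt Bt gen_spec gen_spec] unfolding gen_dom_def by blast

lemma dom_scale: "f \<in> gen_dom \<nu> P \<Longrightarrow> (\<lambda>x. c * f x) \<in> gen_dom \<nu> P"
  using gen_scale[OF Kt Bt gen_spec] unfolding gen_dom_def by blast

lemma dom_sq: "f \<in> gen_dom \<nu> P \<Longrightarrow> sq_integrable \<nu> f \<and> sq_integrable \<nu> (gen \<nu> P f)"
  using gen_spec by (auto simp: is_generator_def)

lemma E_add_left:
  assumes "f \<in> gen_dom \<nu> P" "g \<in> gen_dom \<nu> P" "h \<in> gen_dom \<nu> P"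
  shows "dform \<nu> P (\<lambda>x. f x + g x) h = dform \<nu> P f h + dform \<nu> P g h"
proof -
  have ae: "AE x in \<nu>. gen \<nu> P (\<lambda>x. f x + g x) x = gen \<nu> P f x + gen \<nu> P g x"
    using gen_unique[OF Kt Bt gen_spec[OF dom_add[OF assms(1,2)]] gen_add[OF Kt Bt gen_spec[OF assms(1)] gen_spec[OF assms(2)]]] .
  have "(\<integral>x. gen \<nu> P (\<lambda>x. f x + g x) x * h x \<partial>\<nu>) = (\<integral>x. gen \<nu> P f x * h x + gen \<nu> P g x * h x \<partial>\<nu>)"
  proof (intro integral_cong_AE)
    show "(\<lambda>x. gen \<nu> P (\<lambda>x. f x + g x) x * h x) \<in> borel_measurable \<nu>"
      by (rule borel_measurable_integrable, rule prod_int) (use dom_sq[OF dom_add[OF assms(1,2)]] dom_sq[OF assms(3)] in auto)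
    show "(\<lambda>x. gen \<nu> P f x * h x + gen \<nu> P g x * h x) \<in> borel_measurable \<nu>"
      using prod_int[of \<nu> "gen \<nu> P f" h] prod_int[of \<nu> "gen \<nu> P g" h] dom_sq assms
      by (intro borel_measurable_add borel_measurable_integrable) auto
  qed (use ae in \<open>eventually_elim, simp add: distrib_right\<close>)
  also have "\<dots> = (\<integral>x. gen \<nu> P f x * h x \<partial>\<nu>) + (\<integral>x. gen \<nu> P g x * h x \<partial>\<nu>)"
    using prod_int[of \<nu> "gen \<nu> P f" h] prod_int[of \<nu> "gen \<nu> P g" h] 
      prod_int[of \<nu> "gen \<nu> P f" g] dom_sq assms
    by (intro Bochner_Integration.integral_add) auto
  finally show ?thesis by (simp add: dform_def)
qed

lemma E_scale_left:
  assumes "f \<in> gen_dom \<nu> P" "h \<in> gen_dom \<nu> P"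
  shows "dform \<nu> P (\<lambda>x. c * f x) h = c * dform \<nu> P f h"
proof -
  have ae: "AE x in \<nu>. gen \<nu> P (\<lambda>x. c * f x) x = c * gen \<nu> P f x"
    using gen_unique[OF Kt Bt gen_spec[OF dom_scale[OF assms(1)]] gen_scale[OF Kt Bt gen_spec[OF assms(1)]]] .
  have "(\<integral>x. gen \<nu> P (\<lambda>x. c * f x) x * h x \<partial>\<nu>) = (\<integral>x. c * (gen \<nu> P f x * h x) \<partial>\<nu>)"
  proof (intro integral_cong_AE)
    show "(\<lambda>x. gen \<nu> P (\<lambda>x. c * f x) x * h x) \<in> borel_measurable \<nu>"
      by (rule borel_measurable_integrable, rule prod_int) (use dom_sq[OF dom_scale[OF assms(1)]] dom_sq[OF assms(2)] in auto)
    show "(\<lambda>x. c * (gen \<nu> P f x * h x)) \<in> borel_measurable \<nu>"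
      using prod_int[of \<nu> "gen \<nu> P f" h] dom_sq assms
      by (intro borel_measurable_times borel_measurable_integrable) auto
  qed (use ae in \<open>eventually_elim, simp\<close>)
  then show ?thesis by (simp add: dform_def)
qed

lemma E_add_right:
  assumes "f \<in> gen_dom \<nu> P" "g \<in> gen_dom \<nu> P" "h \<in> gen_dom \<nu> P"
  shows "dform \<nu> P f (\<lambda>x. g x + h x) = dform \<nu> P f g + dform \<nu> P f h"
proof -
  have "(\<integral>x. gen \<nu> P f x * (g x + h x) \<partial>\<nu>) = (\<integral>x. gen \<nu> P f x * g x + gen \<nu> P f x * h x \<partial>\<nu>)"
    by (simp add: distrib_left)
  also have "\<dots> = (\<integral>x. gen \<nu> P f x * g x \<partial>\<nu>) + (\<integral>x. gen \<nu> P f x * h x \<partial>\<nu>)"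
    using prod_int[of \<nu> "gen \<nu> P f" h] prod_int[of \<nu> "gen \<nu> P g" h] 
      prod_int[of \<nu> "gen \<nu> P f" g] dom_sq assms
    by (intro Bochner_Integration.integral_add) auto
  finally show ?thesis by (simp add: dform_def)
qed

lemma E_scale_right:
  shows "dform \<nu> P f (\<lambda>x. c * h x) = c * dform \<nu> P f h"
  by (simp add: dform_def mult.left_commute)

end


context
  fixes \<nu> :: "'a measure" and P :: "real \<Rightarrow> 'a \<Rightarrow> 'a measure"
  assumes Kt: "\<And>t. t \<ge> 0 \<Longrightarrow> P t \<in> \<nu> \<rightarrow>\<^sub>M prob_algebra \<nu>"
    and Bt: "\<And>t. t \<ge> 0 \<Longrightarrow> \<nu> \<bind> P t = \<nu>"
begin

lemma sq_diff: "sq_integrable \<nu> f \<Longrightarrow> sq_integrable \<nu> g \<Longrightarrow> sq_integrable \<nu> (\<lambda>x. f x - g x)"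
  using sq_add[OF Kt Bt, where f=f and g="\<lambda>x. (-1) * g x"] sq_scale[OF Kt Bt, where f=g and c="-1"] by simp

lemma step_bound:
  assumes f: "sq_integrable \<nu> f" and L: "sq_integrable \<nu> L" and t: "t > 0" and eps: "\<epsilon> > 0"
  shows "(\<integral>x. L x * f x \<partial>\<nu>) \<le> \<epsilon> / 2 * (\<integral>x. (f x)\<^sup>2 \<partial>\<nu>)
     + (\<integral>x. ((trans_op P t f x - f x) / t - L x)\<^sup>2 \<partial>\<nu>) / (2 * \<epsilon>)"
proof -
  define T where "T = trans_op P t f"
  define D where "D = (\<lambda>x. (T x - f x) / t)"
  define R where "R = (\<lambda>x. D x - L x)"
  have fm: "f \<in> borel_measurable \<nu>" and fi: "integrable \<nu> (\<lambda>x. (f x)\<^sup>2)"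
    using f by (auto simp: sq_integrable_def)
  have sT: "sq_integrable \<nu> T"
    unfolding T_def trans_op_def[abs_def] using sq_integrable_trans[OF Kt Bt f] t by simp
  have sD: "sq_integrable \<nu> D"
    unfolding D_def using sq_scale[OF Kt Bt sq_diff[OF sT f], where c="1/t"] by simp
  have sR: "sq_integrable \<nu> R" unfolding R_def using sq_diff[OF sD L] .
  have iTf: "integrable \<nu> (\<lambda>x. T x * f x)" by (rule prod_int[OF sT f])
  have iDf: "integrable \<nu> (\<lambda>x. D x * f x)" by (rule prod_int[OF sD f])
  have iRf: "integrable \<nu> (\<lambda>x. R x * f x)" by (rule prod_int[OF sR f])
  have iR2: "integrable \<nu> (\<lambda>x. (R x)\<^sup>2)" using sR by (simp add: sq_integrable_def)
  have iQ: "integrable \<nu> (\<lambda>x. \<integral>y. (f y)\<^sup>2 \<partial>P t x)" and eQ: "(\<integral>x. (\<integral>y. (f y)\<^sup>2 \<partial>P t x) \<partial>\<nu>) = (\<integral>x. (f x)\<^sup>2 \<partial>\<nu>)"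
    using sq_int_trans[OF Kt Bt fm fi] t by auto
  have "(\<integral>x. T x * f x \<partial>\<nu>) \<le> (\<integral>x. ((\<integral>y. (f y)\<^sup>2 \<partial>P t x) + (f x)\<^sup>2) / 2 \<partial>\<nu>)"
  proof (rule integral_mono_AE[OF iTf])
    show "integrable \<nu> (\<lambda>x. ((\<integral>y. (f y)\<^sup>2 \<partial>P t x) + (f x)\<^sup>2) / 2)" using iQ fi by auto
    show "AE x in \<nu>. T x * f x \<le> ((\<integral>y. (f y)\<^sup>2 \<partial>P t x) + (f x)\<^sup>2) / 2"
      using trans_sq_le[OF Kt Bt fm fi] t
    proof -
      have "AE x in \<nu>. (\<integral>y. f y \<partial>P t x)\<^sup>2 \<le> (\<integral>y. (f y)\<^sup>2 \<partial>P t x)"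
        using trans_sq_le[OF Kt Bt fm fi] t by simp
      then show ?thesis
      proof eventually_elim
        case (elim x)
        have "0 \<le> (T x - f x)\<^sup>2" by simp
        then have "2 * (T x * f x) \<le> (T x)\<^sup>2 + (f x)\<^sup>2" by (simp add: power2_diff)
        then show ?case using elim by (simp add: T_def trans_op_def)
      qed
    qed
  qed
  also have "\<dots> = (\<integral>x. (f x)\<^sup>2 \<partial>\<nu>)"
    using iQ fi eQ by simp
  finally have Tf: "(\<integral>x. T x * f x \<partial>\<nu>) \<le> (\<integral>x. (f x)\<^sup>2 \<partial>\<nu>)" .
  have "(\<integral>x. D x * f x \<partial>\<nu>) = (\<integral>x. (T x * f x - (f x)\<^sup>2) / t \<partial>\<nu>)"
    by (simp add: D_def power2_eq_square left_diff_distrib)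
  also have "\<dots> = ((\<integral>x. T x * f x \<partial>\<nu>) - (\<integral>x. (f x)\<^sup>2 \<partial>\<nu>)) / t"
    using iTf fi by simp
  finally have Df: "(\<integral>x. D x * f x \<partial>\<nu>) \<le> 0"
    using Tf t by (simp add: divide_nonpos_pos)
  have "(\<integral>x. L x * f x \<partial>\<nu>) = (\<integral>x. D x * f x - R x * f x \<partial>\<nu>)"
    by (simp add: R_def left_diff_distrib)
  also have "\<dots> = (\<integral>x. D x * f x \<partial>\<nu>) - (\<integral>x. R x * f x \<partial>\<nu>)"
    using iDf iRf by simp
  finally have Lf: "(\<integral>x. L x * f x \<partial>\<nu>) = (\<integral>x. D x * f x \<partial>\<nu>) - (\<integral>x. R x * f x \<partial>\<nu>)" .
  have "- (\<integral>x. R x * f x \<partial>\<nu>) = (\<integral>x. - (R x * f x) \<partial>\<nu>)" by simp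
  also have "\<dots> \<le> (\<integral>x. \<epsilon> / 2 * (f x)\<^sup>2 + (R x)\<^sup>2 / (2 * \<epsilon>) \<partial>\<nu>)"
  proof (rule integral_mono)
    show "integrable \<nu> (\<lambda>x. - (R x * f x))" using iRf by simp
    show "integrable \<nu> (\<lambda>x. \<epsilon> / 2 * (f x)\<^sup>2 + (R x)\<^sup>2 / (2 * \<epsilon>))" using fi iR2 by auto
    fix x
    have "0 \<le> (\<epsilon> * f x + R x)\<^sup>2" by simp
    then have "0 \<le> \<epsilon>\<^sup>2 * (f x)\<^sup>2 + 2 * \<epsilon> * (R x * f x) + (R x)\<^sup>2"
      by (simp add: power2_sum power_mult_distrib algebra_simps)
    then have h: "- (R x * f x) * (2 * \<epsilon>) \<le> (\<epsilon> / 2 * (f x)\<^sup>2 + (R x)\<^sup>2 / (2 * \<epsilon>)) * (2 * \<epsilon>)"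
      using eps by (simp add: algebra_simps power2_eq_square)
    show "- (R x * f x) \<le> \<epsilon> / 2 * (f x)\<^sup>2 + (R x)\<^sup>2 / (2 * \<epsilon>)"
      by (rule mult_right_le_imp_le[OF h]) (use eps in simp)
  qed
  also have "\<dots> = \<epsilon> / 2 * (\<integral>x. (f x)\<^sup>2 \<partial>\<nu>) + (\<integral>x. (R x)\<^sup>2 \<partial>\<nu>) / (2 * \<epsilon>)"
    using fi iR2 by simp
  finally have "- (\<integral>x. R x * f x \<partial>\<nu>) \<le> \<epsilon> / 2 * (\<integral>x. (f x)\<^sup>2 \<partial>\<nu>) + (\<integral>x. (R x)\<^sup>2 \<partial>\<nu>) / (2 * \<epsilon>)" .
  then show ?thesis using Df Lf unfolding R_def D_def T_def by simp
qed

lemma sR_lemma: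
  assumes f: "sq_integrable \<nu> f" and L: "sq_integrable \<nu> L" and t: "t > 0"
  shows "sq_integrable \<nu> (\<lambda>x. (trans_op P t f x - f x) / t - L x)"
proof -
  have sT: "sq_integrable \<nu> (trans_op P t f)"
    unfolding trans_op_def[abs_def] using sq_integrable_trans[OF Kt Bt f] t by simp
  have sD: "sq_integrable \<nu> (\<lambda>x. (trans_op P t f x - f x) / t)"
    using sq_scale[OF Kt Bt sq_diff[OF sT f], where c="1/t"] by simp
  show ?thesis using sq_diff[OF sD L] .
qed

lemma E_pos:
  assumes fd: "f \<in> gen_dom \<nu> P"
  shows "0 \<le> dform \<nu> P f f"
proof -
  define L where "L = gen \<nu> P f"
  have gf: "is_generator \<nu> P f L" unfolding L_def by (rule gen_spec[OF Kt Bt fd])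
  have f: "sq_integrable \<nu> f" and Ls: "sq_integrable \<nu> L" using gf by (auto simp: is_generator_def)
  define r where "r = (\<lambda>t. \<integral>x. ((trans_op P t f x - f x) / t - L x)\<^sup>2 \<partial>\<nu>)"
  define c where "c = (\<integral>x. (f x)\<^sup>2 \<partial>\<nu>)"
  have e0: "((\<lambda>t. \<integral>\<^sup>+x. ennreal (((trans_op P t f x - f x) / t - L x)\<^sup>2) \<partial>\<nu>) \<longlongrightarrow> 0) (at_right 0)"
    using gf by (simp add: is_generator_def)
  have ev: "eventually (\<lambda>t. (\<integral>\<^sup>+x. ennreal (((trans_op P t f x - f x) / t - L x)\<^sup>2) \<partial>\<nu>) = ennreal (r t)) (at_right (0::real))"
  proof (rule eventually_at_rightI[where b=1])
    fix t :: real assume "t \<in> {0<..<1}"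
    then have t: "t > 0" by auto
    show "(\<integral>\<^sup>+x. ennreal (((trans_op P t f x - f x) / t - L x)\<^sup>2) \<partial>\<nu>) = ennreal (r t)"
      unfolding r_def using sR_lemma[OF f Ls t]
      by (intro nn_integral_eq_integral) (auto simp: sq_integrable_def)
  qed simp
  have "((\<lambda>t. ennreal (r t)) \<longlongrightarrow> ennreal 0) (at_right (0::real))"
    using tendsto_cong[OF ev] e0 by simp
  moreover have "\<forall>\<^sub>F t in at_right (0::real). 0 \<le> r t"
    unfolding r_def by (intro always_eventually allI integral_nonneg) auto
  ultimately have r0: "(r \<longlongrightarrow> 0) (at_right (0::real))"
    using tendsto_ennreal_iff by blast
  have bound: "(\<integral>x. L x * f x \<partial>\<nu>) \<le> \<epsilon> / 2 * c" if eps: "\<epsilon> > 0" for \<epsilon>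
  proof -
    have lim: "((\<lambda>t. \<epsilon> / 2 * c + r t / (2 * \<epsilon>)) \<longlongrightarrow> \<epsilon> / 2 * c + 0 / (2 * \<epsilon>)) (at_right (0::real))"
      by (intro tendsto_intros r0) (use eps in auto)
    have evb: "eventually (\<lambda>t. (\<integral>x. L x * f x \<partial>\<nu>) \<le> \<epsilon> / 2 * c + r t / (2 * \<epsilon>)) (at_right (0::real))"
    proof (rule eventually_at_rightI[where b=1])
      fix t :: real assume "t \<in> {0<..<1}"
      then have t: "t > 0" by auto
      show "(\<integral>x. L x * f x \<partial>\<nu>) \<le> \<epsilon> / 2 * c + r t / (2 * \<epsilon>)"
        unfolding r_def c_def by (rule step_bound[OF f Ls t eps])
    qed simp
    show ?thesis using tendsto_le[OF trivial_limit_at_right_real lim tendsto_const evb] by simp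
  qed
  have c0: "0 \<le> c" unfolding c_def by (intro integral_nonneg_AE) auto
  have "(\<integral>x. L x * f x \<partial>\<nu>) \<le> 0"
  proof (rule ccontr)
    assume "\<not> ?thesis"
    then have pos: "0 < (\<integral>x. L x * f x \<partial>\<nu>)" by simp
    define \<epsilon> where "\<epsilon> = (\<integral>x. L x * f x \<partial>\<nu>) / (c + 1)"
    have ep: "\<epsilon> > 0" using pos c0 by (simp add: \<epsilon>_def)
    have "\<epsilon> / 2 * c < (\<integral>x. L x * f x \<partial>\<nu>)"
    proof -
      have "\<epsilon> * c \<le> \<epsilon> * (c + 1)" using ep by simp
      also have "\<dots> = (\<integral>x. L x * f x \<partial>\<nu>)" using c0 by (simp add: \<epsilon>_def)
      finally show ?thesis using pos by simp
    qed
    then show False using bound[OF ep] by simp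
  qed
  then show ?thesis by (simp add: dform_def L_def)
qed

end


definition adm :: "('a \<Rightarrow> real) set \<Rightarrow> (('a \<Rightarrow> real) \<Rightarrow> ('a \<Rightarrow> real) \<Rightarrow> real) \<Rightarrow> real \<Rightarrow> bool" where
  "adm V E C \<longleftrightarrow> (\<forall>u\<in>V. \<forall>v\<in>V. E u v \<le> C * sqrt (E u u) * sqrt (E v v))"

context
  fixes V :: "('a \<Rightarrow> real) set" and E :: "('a \<Rightarrow> real) \<Rightarrow> ('a \<Rightarrow> real) \<Rightarrow> real"
  assumes addV: "\<And>u v. u \<in> V \<Longrightarrow> v \<in> V \<Longrightarrow> (\<lambda>x. u x + v x) \<in> V"
    and scaleV: "\<And>u c. u \<in> V \<Longrightarrow> (\<lambda>x. c * u x) \<in> V"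
    and EaddL: "\<And>u v w. u \<in> V \<Longrightarrow> v \<in> V \<Longrightarrow> w \<in> V \<Longrightarrow> E (\<lambda>x. u x + v x) w = E u w + E v w"
    and EaddR: "\<And>u v w. u \<in> V \<Longrightarrow> v \<in> V \<Longrightarrow> w \<in> V \<Longrightarrow> E u (\<lambda>x. v x + w x) = E u v + E u w"
    and EscL: "\<And>u w c. u \<in> V \<Longrightarrow> w \<in> V \<Longrightarrow> E (\<lambda>x. c * u x) w = c * E u w"
    and EscR: "\<And>u w c. E u (\<lambda>x. c * w x) = c * E u w"
    and Epos: "\<And>u. u \<in> V \<Longrightarrow> 0 \<le> E u u"
begin


lemma comb_facts:
  assumes u: "u \<in> V" and v: "v \<in> V"
  shows "(\<lambda>x. u x + c * v x) \<in> V"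
    "E u (\<lambda>x. u x + c * v x) = E u u + c * E u v"
    "E v (\<lambda>x. u x + c * v x) = E v u + c * E v v"
    "E (\<lambda>x. u x + c * v x) u = E u u + c * E v u"
    "E (\<lambda>x. u x + c * v x) (\<lambda>x. u x + c * v x) = E u u + c * (E u v + E v u) + c\<^sup>2 * E v v"
    "E (\<lambda>x. u x + c * v x) v = E u v + c * E v v"
proof -
  have cv: "(\<lambda>x. c * v x) \<in> V" by (rule scaleV[OF v])
  show w: "(\<lambda>x. u x + c * v x) \<in> V" using addV[OF u cv] by simp
  show e1: "E u (\<lambda>x. u x + c * v x) = E u u + c * E u v"
    using EaddR[OF u u cv] EscR by simp
  show e2: "E v (\<lambda>x. u x + c * v x) = E v u + c * E v v"
    using EaddR[OF v u cv] EscR by simp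
  show "E (\<lambda>x. u x + c * v x) u = E u u + c * E v u"
    using EaddL[OF u cv u] EscL[OF v u] by simp
  show "E (\<lambda>x. u x + c * v x) v = E u v + c * E v v"
    using EaddL[OF u cv v] EscL[OF v v] by simp
  have "E (\<lambda>x. u x + c * v x) (\<lambda>x. u x + c * v x) = E u (\<lambda>x. u x + c * v x) + c * E v (\<lambda>x. u x + c * v x)"
    using EaddL[OF u cv w] EscL[OF v w] by simp
  then show "E (\<lambda>x. u x + c * v x) (\<lambda>x. u x + c * v x) = E u u + c * (E u v + E v u) + c\<^sup>2 * E v v"
    unfolding e1 e2 by (simp add: algebra_simps power2_eq_square)
qed

lemma core:
  assumes f: "f \<in> V" and h: "h \<in> V" and p: "E f f > 0" and b: "E f h > 0" and ba: "E h f = - E f h"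
  shows "\<exists>\<delta>>0. \<forall>C. adm V E C \<longrightarrow> 1 + \<delta> \<le> C"
proof (cases "E h h = 0")
  case True
  have "\<not> adm V E C" for C
  proof
    assume "adm V E C"
    then have "E f h \<le> C * sqrt (E f f) * sqrt (E h h)" using f h by (auto simp: adm_def)
    then show False using True b by simp
  qed
  then show ?thesis by (intro exI[of _ 1]) auto
next
  case False
  define p where "p = E f f"
  define b where "b = E f h"
  define r where "r = E h h"
  have r: "r > 0" using Epos[OF h] False by (simp add: r_def)
  have pp: "p > 0" and bb: "b > 0" using p b by (simp_all add: p_def b_def)
  define m where "m = p + b\<^sup>2 / r"
  have mp: "m > p" using r bb by (simp add: m_def)
  define w where "w = (\<lambda>x. f x + (b / r) * h x)"
  note cf = comb_facts[OF f h, of "b / r"]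
  have wV: "w \<in> V" unfolding w_def using cf(1) .
  have Efw: "E f w = m"
    unfolding w_def cf(2) using r by (simp add: m_def p_def b_def r_def power2_eq_square)
  have Eww: "E w w = m"
    unfolding w_def cf(5) using r ba by (simp add: m_def p_def b_def r_def power2_eq_square)
  define \<delta> where "\<delta> = sqrt (m / p) - 1"
  have "1 < m / p" using mp pp by simp
  then have d: "\<delta> > 0" by (simp add: \<delta>_def)
  have "1 + \<delta> \<le> C" if "adm V E C" for C
  proof -
    have "E f w \<le> C * sqrt (E f f) * sqrt (E w w)" using that f wV by (auto simp: adm_def)
    then have "m \<le> C * sqrt p * sqrt m" using Efw Eww by (simp add: p_def)
    moreover have sm: "sqrt m > 0" using mp pp by simp
    moreover have "sqrt m * sqrt m = m" using mp pp by simp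
    ultimately have "sqrt m * sqrt m \<le> (C * sqrt p) * sqrt m" by linarith
    then have "sqrt m \<le> C * sqrt p" using sm by (rule mult_right_le_imp_le)
    then have "sqrt m / sqrt p \<le> C" using pp by (simp add: divide_le_eq)
    then show ?thesis by (simp add: \<delta>_def real_sqrt_divide)
  qed
  then show ?thesis using d by blast
qed

lemma main_pos:
  assumes f: "f \<in> V" and g: "g \<in> V" and p: "E f f > 0" and ne: "E f g \<noteq> E g f"
  shows "\<exists>\<delta>>0. \<forall>C. adm V E C \<longrightarrow> 1 + \<delta> \<le> C"
proof -
  define s where "s = (E f g + E g f) / 2"
  define a where "a = (E f g - E g f) / 2"
  define h0 where "h0 = (\<lambda>x. g x + (- s / E f f) * f x)"
  note cf = comb_facts[OF g f, of "- s / E f f"]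
  have h0V: "h0 \<in> V" unfolding h0_def by (rule cf(1))
  have e1: "E f h0 = a" unfolding h0_def cf(3) using p by (simp add: a_def s_def field_simps)
  have e2: "E h0 f = - a" unfolding h0_def cf(6) using p by (simp add: a_def s_def field_simps)
  have a0: "a \<noteq> 0" using ne by (simp add: a_def)
  show ?thesis
  proof (cases "a > 0")
    case True
    then show ?thesis using core[OF f h0V p] e1 e2 by simp
  next
    case False
    then have an: "a < 0" using a0 by simp
    define h1 where "h1 = (\<lambda>x. (-1) * h0 x)"
    have h1V: "h1 \<in> V" unfolding h1_def by (rule scaleV[OF h0V])
    have "E f h1 = - a" unfolding h1_def using EscR[of f "-1" h0] e1 by simp
    moreover have "E h1 f = a" unfolding h1_def using EscL[OF h0V f, of "-1"] e2 by simp
    ultimately show ?thesis using core[OF f h1V p] an by simp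
  qed
qed

lemma main_abs:
  assumes f: "f \<in> V" and g: "g \<in> V" and ne: "E f g \<noteq> E g f"
  shows "\<exists>\<delta>>0. \<forall>C. adm V E C \<longrightarrow> 1 + \<delta> \<le> C"
proof (cases "E f f > 0")
  case True
  then show ?thesis using main_pos[OF f g _ ne] by simp
next
  case F1: False
  show ?thesis
  proof (cases "E g g > 0")
    case True
    then show ?thesis using main_pos[OF g f _ ne[symmetric]] by simp
  next
    case False
    have ff: "E f f = 0" and gg: "E g g = 0" using F1 False Epos[OF f] Epos[OF g] by auto
    note c1 = comb_facts[OF f g, of 1] and c2 = comb_facts[OF f g, of "-1"]
    have "0 \<le> E f g + E g f" using Epos[OF c1(1)] c1(5) ff gg by simp
    moreover have "0 \<le> - (E f g + E g f)" using Epos[OF c2(1)] c2(5) ff gg by simp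
    ultimately have anti: "E g f = - E f g" by linarith
    have "\<not> adm V E C" for C
    proof
      assume ad: "adm V E C"
      have "E f g \<le> C * sqrt (E f f) * sqrt (E g g)" "E g f \<le> C * sqrt (E g g) * sqrt (E f f)"
        using ad f g by (auto simp: adm_def)
      then show False using ff gg anti ne by simp
    qed
    then show ?thesis by (intro exI[of _ 1]) auto
  qed
qed

end

theorem proposition3p1:
  fixes \<nu> :: "'a measure" and P :: "real \<Rightarrow> 'a \<Rightarrow> 'a measure"
  assumes "markov_semigroup \<nu> P"
    and "stationary \<nu> P"
    and "\<not> (\<forall>f\<in>gen_dom \<nu> P. \<forall>g\<in>gen_dom \<nu> P. dform \<nu> P f g = dform \<nu> P g f)"
  shows "sector_const \<nu> P > 1"
proof -
  have Kt: "\<And>t. t \<ge> 0 \<Longrightarrow> P t \<in> \<nu> \<rightarrow>\<^sub>M prob_algebra \<nu>"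
    using assms(1) by (simp add: markov_semigroup_def)
  have Bt: "\<And>t. t \<ge> 0 \<Longrightarrow> \<nu> \<bind> P t = \<nu>"
    using assms(2) by (simp add: stationary_def)
  obtain f g where f: "f \<in> gen_dom \<nu> P" and g: "g \<in> gen_dom \<nu> P"
    and ne: "dform \<nu> P f g \<noteq> dform \<nu> P g f" using assms(3) by blast
  obtain \<delta> where d: "\<delta> > 0" and bnd: "\<And>C. adm (gen_dom \<nu> P) (dform \<nu> P) C \<Longrightarrow> 1 + \<delta> \<le> C"
    using main_abs[of "gen_dom \<nu> P" "dform \<nu> P", OF dom_add[OF Kt Bt] dom_scale[OF Kt Bt]
        E_add_left[OF Kt Bt] E_add_right[OF Kt Bt] E_scale_left[OF Kt Bt] E_scale_right[OF Kt Bt]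
        E_pos[OF Kt Bt] f g ne] by blast
  have "ereal (1 + \<delta>) \<le> sector_const \<nu> P"
    unfolding sector_const_def
  proof (rule Inf_greatest)
    fix y assume "y \<in> ereal ` {C. \<forall>f\<in>gen_dom \<nu> P. \<forall>g\<in>gen_dom \<nu> P.
      dform \<nu> P f g \<le> C * sqrt (dform \<nu> P f f) * sqrt (dform \<nu> P g g)}"
    then obtain C where y: "y = ereal C" and C0: "\<forall>f\<in>gen_dom \<nu> P. \<forall>g\<in>gen_dom \<nu> P.
      dform \<nu> P f g \<le> C * sqrt (dform \<nu> P f f) * sqrt (dform \<nu> P g g)"
      by auto
    have C: "adm (gen_dom \<nu> P) (dform \<nu> P) C" using C0 unfolding adm_def by blast
    show "ereal (1 + \<delta>) \<le> y" using bnd[OF C] y by simp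
  qed
  moreover have "(1::ereal) < ereal (1 + \<delta>)" using d by simp
  ultimately show ?thesis by (meson less_le_trans)
qed

end
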